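(* Let $s\in[0,1]$, $\tau\in(0,1)$, and let $I$ be a $\tau$-bounded simultaneous offering instance with $\sum_{i\in V_{\mathrm{high}}}p_i\le k$. Then $$R_{\mathsf{ALG}^s_{\mathtt{sim}}}(I)\ \ge\ \Big(s-\frac{s}{\tau}+\frac{\mathbb{E}[\min\{\mathrm{Pois}(sk),k\}]}{\tau k}\Big)\mathrm{LP}_{\mathtt{sim}}(I).$$
   Context: Simultaneous offering problem: integers $1\le k\le n$; candidates $i\in[n]$ with acceptance probabilities $p_i\in[0,1]$ and values $v_i\ge0$, labeled so that $v_1\ge\cdots\ge v_n$. A policy chooses a (possibly random) set $S$ of candidates who all receive offers at once; each accepts independently with probability $p_i$; with $A$ the acceptors the reward is $\sum_{i\in A}v_i-\max\{|A|-k,0\}$; $R_\pi(I)$ is expected reward. The instance is $\tau$-bounded if $v_i\ge\tau$ for all $i$. $V_{\mathrm{high}}=\{i:v_i>1\}$. $\mathrm{LP}_{\mathtt{sim}}(I)$: maximize $\sum_iv_ip_iy_i+z$ s.t. $z\le k-\sum_ip_iy_i$, $z\le0$, $0\le y_i\le1$. Policy $\mathsf{ALG}^s_{\mathtt{sim}}$: take an optimal solution $y$ of $\mathrm{LP}_{\mathtt{sim}}(I)$ of prefix form ($y_i=1$ for $i<j$, $y_i=0$ for $i>j$ for some $j$) whose total mass is $\min\{k,\sum_ip_i\}$ if $\sum_{i\in V_{\mathrm{high}}}p_i\le k$ and $\sum_{i\in V_{\mathrm{high}}}p_i$ otherwise; set $\kappa=s\sum_iy_ip_i$; let $y'$ be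 a vector of the form $(1,\dots,1,\theta,0,\dots,0)$ with $\theta\in[0,1]$ and $\sum_iy'_ip_i=\kappa$; then send an offer to each candidate $i$ independently with probability $y'_i$. $\mathrm{Pois}(\lambda)$ is a Poisson random variable with mean $\lambda$. *)

theory Defs
  imports "HOL-Analysis.Analysis"
begin

text \<open>Candidates are indexed by {1..n}; p i, v i are acceptance probabilities and values.\<close>

definition valid_instance :: "nat \<Rightarrow> nat \<Rightarrow> (nat \<Rightarrow> real) \<Rightarrow> (nat \<Rightarrow> real) \<Rightarrow> bool" where
  "valid_instance n k p v \<longleftrightarrow> 1 \<le> k \<and> k \<le> n \<and>
     (\<forall>i\<in>{1..n}. 0 \<le> p i \<and> p i \<le> 1 \<and> 0 \<le> v i) \<and>
     (\<forall>i\<in>{1..n}. \<forall>j\<in>{1..n}. i \<le> j \<longrightarrow> v j \<le> v i)"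

definition tau_bounded :: "nat \<Rightarrow> (nat \<Rightarrow> real) \<Rightarrow> real \<Rightarrow> bool" where
  "tau_bounded n v \<tau> \<longleftrightarrow> (\<forall>i\<in>{1..n}. \<tau> \<le> v i)"

definition V_high :: "nat \<Rightarrow> (nat \<Rightarrow> real) \<Rightarrow> nat set" where
  "V_high n v = {i\<in>{1..n}. v i > 1}"

definition reward :: "nat \<Rightarrow> (nat \<Rightarrow> real) \<Rightarrow> nat set \<Rightarrow> real" where
  "reward k v A = (\<Sum>i\<in>A. v i) - max (real (card A) - real k) 0"

definition subset_prob :: "nat \<Rightarrow> (nat \<Rightarrow> real) \<Rightarrow> nat set \<Rightarrow> real" where
  "subset_prob n q S = (\<Prod>i\<in>S. q i) * (\<Prod>i\<in>{1..n} - S. 1 - q i)"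

text \<open>Expected reward of the randomized policy sending an offer to each i independently
  with probability y' i: the offered set S is random, then each i in S accepts
  independently with probability p i.\<close>
definition indep_offer_reward ::
  "nat \<Rightarrow> nat \<Rightarrow> (nat \<Rightarrow> real) \<Rightarrow> (nat \<Rightarrow> real) \<Rightarrow> (nat \<Rightarrow> real) \<Rightarrow> real" where
  "indep_offer_reward n k p v y' =
     (\<Sum>S\<in>Pow {1..n}. subset_prob n y' S *
        (\<Sum>A\<in>Pow S. (\<Prod>i\<in>A. p i) * (\<Prod>i\<in>S - A. 1 - p i) * reward k v A))"

definition LP_feasible :: "nat \<Rightarrow> nat \<Rightarrow> (nat \<Rightarrow> real) \<Rightarrow> (nat \<Rightarrow> real) \<Rightarrow> real \<Rightarrow> bool" where
  "LP_feasible n k p y z \<longleftrightarrow> z \<le> real k - (\<Sum>i=1..n. p i * y i) \<and> z \<le> 0 \<and>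
     (\<forall>i\<in>{1..n}. 0 \<le> y i \<and> y i \<le> 1)"

definition LP_obj :: "nat \<Rightarrow> (nat \<Rightarrow> real) \<Rightarrow> (nat \<Rightarrow> real) \<Rightarrow> (nat \<Rightarrow> real) \<Rightarrow> real \<Rightarrow> real" where
  "LP_obj n p v y z = (\<Sum>i=1..n. v i * p i * y i) + z"

definition LP_sim :: "nat \<Rightarrow> nat \<Rightarrow> (nat \<Rightarrow> real) \<Rightarrow> (nat \<Rightarrow> real) \<Rightarrow> real" where
  "LP_sim n k p v = Sup {LP_obj n p v y z | y z. LP_feasible n k p y z}"

definition prefix_form :: "nat \<Rightarrow> (nat \<Rightarrow> real) \<Rightarrow> bool" where
  "prefix_form n y \<longleftrightarrow> (\<exists>j\<in>{1..n}. (\<forall>i\<in>{1..n}. i < j \<longrightarrow> y i = 1) \<and>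
                                    (\<forall>i\<in>{1..n}. j < i \<longrightarrow> y i = 0))"

definition threshold_form :: "nat \<Rightarrow> (nat \<Rightarrow> real) \<Rightarrow> bool" where
  "threshold_form n y \<longleftrightarrow> (\<exists>j\<in>{1..n}. 0 \<le> y j \<and> y j \<le> 1 \<and>
       (\<forall>i\<in>{1..n}. i < j \<longrightarrow> y i = 1) \<and> (\<forall>i\<in>{1..n}. j < i \<longrightarrow> y i = 0))"

definition target_mass :: "nat \<Rightarrow> nat \<Rightarrow> (nat \<Rightarrow> real) \<Rightarrow> (nat \<Rightarrow> real) \<Rightarrow> real" where
  "target_mass n k p v =
     (if (\<Sum>i\<in>V_high n v. p i) \<le> real k then min (real k) (\<Sum>i=1..n. p i)
      else (\<Sum>i\<in>V_high n v. p i))"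

text \<open>(y, y') is a valid run of the choices made by ALG^s_sim.\<close>
definition ALG_sim_choice ::
  "real \<Rightarrow> nat \<Rightarrow> nat \<Rightarrow> (nat \<Rightarrow> real) \<Rightarrow> (nat \<Rightarrow> real) \<Rightarrow> (nat \<Rightarrow> real) \<Rightarrow> (nat \<Rightarrow> real) \<Rightarrow> bool" where
  "ALG_sim_choice s n k p v y y' \<longleftrightarrow>
     (\<exists>z. LP_feasible n k p y z \<and> LP_obj n p v y z = LP_sim n k p v) \<and>
     prefix_form n y \<and>
     (\<Sum>i=1..n. y i * p i) = target_mass n k p v \<and>
     threshold_form n y' \<and>
     (\<Sum>i=1..n. y' i * p i) = s * (\<Sum>i=1..n. y i * p i)"

text \<open>E[min(Pois(lambda), k)].\<close>
definition exp_min_pois :: "real \<Rightarrow> nat \<Rightarrow> real" where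
  "exp_min_pois lam k = (\<Sum>j. real (min j k) * (lam ^ j / fact j * exp (- lam)))"

end

theory Submission imports Defs begin

fun Ef :: "nat \<Rightarrow> real \<Rightarrow> real" where
  "Ef 0 x = 0"
| "Ef (Suc r) x = Ef r x + x ^ r / fact r"

definition Pf :: "nat \<Rightarrow> real \<Rightarrow> real" where
  "Pf r x = exp (- x) * Ef r x"

fun Gf :: "nat \<Rightarrow> real \<Rightarrow> real" where
  "Gf 0 x = 0"
| "Gf (Suc r) x = Gf r x + 1 - Pf (Suc r) x"

lemma Ef_deriv: "DERIV (Ef (Suc r)) x :> Ef r x"
proof (induction r)
  case 0
  then show ?case by simp
next
  case (Suc r)
  have d0: "DERIV (\<lambda>x. x ^ Suc r / fact (Suc r)) x :> (real (Suc r) * x ^ r) / fact (Suc r)"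
    using DERIV_cdivide[OF DERIV_pow[of "Suc r" x UNIV], of "fact (Suc r)"] by simp
  have "(real (Suc r) * x ^ r) / fact (Suc r) = x ^ r / fact r"
    by (simp add: fact_Suc del: of_nat_Suc)
  with d0 have d: "DERIV (\<lambda>x. x ^ Suc r / fact (Suc r)) x :> x ^ r / fact r" by simp
  have "DERIV (\<lambda>x. Ef (Suc r) x + x ^ Suc r / fact (Suc r)) x :> Ef r x + x ^ r / fact r"
    using Suc d by (intro DERIV_add)
  then show ?case by simp
qed

lemma Pf_deriv: "DERIV (Pf r) x :> (if r = 0 then 0 else - exp (-x) * x ^ (r - 1) / fact (r - 1))"
proof (cases r)
  case 0
  have "Pf 0 = (\<lambda>x. 0)" by (simp add: Pf_def fun_eq_iff)
  then show ?thesis using 0 by simp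
next
  case (Suc r')
  have "DERIV (\<lambda>x. exp (-x) * Ef (Suc r') x) x :> (- exp (-x)) * Ef (Suc r') x + exp (-x) * Ef r' x"
  proof -
    have h1: "DERIV (\<lambda>x. exp (-x)) x :> - exp (-x)" by (auto intro!: derivative_eq_intros)
    show ?thesis using DERIV_mult[OF h1 Ef_deriv[of r' x]] by (simp add: algebra_simps)
  qed
  then show ?thesis using Suc unfolding Pf_def by (simp add: algebra_simps)
qed

lemma Pf_deriv_nonpos: "0 \<le> x \<Longrightarrow> (if r = 0 then 0 else - exp (-x) * x ^ (r - 1) / fact (r - 1)) \<le> (0::real)"
  by auto

lemma Pf_antimono: assumes "0 \<le> x" "x \<le> y" shows "Pf r y \<le> Pf r x"
  apply (rule DERIV_nonpos_imp_nonincreasing[OF assms(2)])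
  using Pf_deriv Pf_deriv_nonpos assms by (meson order_trans)

lemma Pf_zero: "Pf r 0 \<le> 1"
proof -
  have "Ef (Suc r) 0 = 1" by (induction r) auto
  then show ?thesis by (cases r) (auto simp: Pf_def)
qed

lemma Gf_deriv: "DERIV (Gf r) x :> Pf r x"
proof (induction r)
  case 0
  then show ?case by (simp add: Pf_def)
next
  case (Suc r)
  have "DERIV (\<lambda>x. Gf r x + 1 - Pf (Suc r) x) x :> Pf r x + 0 - (- exp (-x) * x ^ r / fact r)"
    using Suc Pf_deriv[of "Suc r" x] by (auto intro!: derivative_eq_intros)
  moreover have "Pf r x + 0 - (- exp (-x) * x ^ r / fact r) = Pf (Suc r) x"
    by (simp add: Pf_def algebra_simps)
  ultimately show ?case by simp
qed

lemma Gf_zero: "Gf r 0 = 0"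
proof -
  have "Ef (Suc r) 0 = 1" for r by (induction r) auto
  then show ?thesis by (induction r) (auto simp: Pf_def)
qed

lemma Gf_mvt: assumes "0 \<le> x" "0 \<le> h" shows "Gf r (x + h) \<le> Gf r x + h * Pf r x"
proof -
  have "(\<lambda>t. Gf r (x + t) - t * Pf r x) h \<le> (\<lambda>t. Gf r (x + t) - t * Pf r x) 0"
  proof (rule DERIV_nonpos_imp_nonincreasing[OF assms(2)])
    fix t assume t: "0 \<le> t" "t \<le> h"
    have "DERIV (\<lambda>t. Gf r (x + t) - t * Pf r x) t :> Pf r (x + t) * (0 + 1) - (1 * Pf r x)"
      by (auto intro!: derivative_eq_intros DERIV_chain2[OF Gf_deriv])
    moreover have "Pf r (x + t) \<le> Pf r x" using Pf_antimono assms t by simp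
    ultimately show "\<exists>y. DERIV (\<lambda>t. Gf r (x + t) - t * Pf r x) t :> y \<and> y \<le> 0" by force
  qed
  then show ?thesis by simp
qed

lemma Gf_lower: assumes "0 \<le> u" shows "u * Pf r u \<le> Gf r u"
proof -
  have "(\<lambda>w. Gf r w - w * Pf r u) 0 \<le> (\<lambda>w. Gf r w - w * Pf r u) u"
  proof (rule DERIV_nonneg_imp_nondecreasing[OF assms])
    fix t assume t: "0 \<le> t" "t \<le> u"
    have "DERIV (\<lambda>w. Gf r w - w * Pf r u) t :> Pf r t - (1 * Pf r u)"
      by (auto intro!: derivative_eq_intros Gf_deriv)
    moreover have "Pf r u \<le> Pf r t" using Pf_antimono t by simp
    ultimately show "\<exists>y. DERIV (\<lambda>w. Gf r w - w * Pf r u) t :> y \<and> y \<ge> 0" by force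
  qed
  then show ?thesis by (simp add: Gf_zero)
qed

lemma Gf_le: assumes "0 \<le> x" shows "Gf r x \<le> x"
proof -
  have "(\<lambda>w. Gf r w - w) x \<le> (\<lambda>w. Gf r w - w) 0"
  proof (rule DERIV_nonpos_imp_nonincreasing[OF assms])
    fix t assume t: "0 \<le> t" "t \<le> x"
    have "DERIV (\<lambda>w. Gf r w - w) t :> Pf r t - 1"
      by (auto intro!: derivative_eq_intros Gf_deriv)
    moreover have "Pf r t \<le> 1" using Pf_antimono[of 0 t r] Pf_zero[of r] t by linarith
    ultimately show "\<exists>y. DERIV (\<lambda>w. Gf r w - w) t :> y \<and> y \<le> 0" by force
  qed
  then show ?thesis by (simp add: Gf_zero)
qed

lemma Gf_concave: assumes "0 \<le> t" "t \<le> 1" "0 \<le> x" shows "t * Gf r x \<le> Gf r (t * x)"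
proof -
  define u where "u = t * x"
  have u0: "0 \<le> u" using assms by (simp add: u_def)
  have "0 \<le> x - u" using assms by (simp add: u_def mult_left_le_one_le)
  have 1: "Gf r x \<le> Gf r u + (x - u) * Pf r u" using Gf_mvt[OF u0 \<open>0 \<le> x - u\<close>, of r] by simp
  have 2: "u * Pf r u \<le> Gf r u" using Gf_lower[OF u0] .
  have "t * Gf r x \<le> t * (Gf r u + (x - u) * Pf r u)" using 1 assms by (simp add: mult_left_mono)
  also have "\<dots> = t * Gf r u + (1 - t) * (u * Pf r u)" by (simp add: u_def algebra_simps)
  also have "\<dots> \<le> t * Gf r u + (1 - t) * Gf r u" using 2 assms by (simp add: mult_left_mono)
  also have "\<dots> = Gf r u" by (simp add: algebra_simps)
  finally show ?thesis by (simp add: u_def)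
qed

lemma Gf_closed: "Gf r x = real r - exp (-x) * (\<Sum>i<r. real (r - i) * (x ^ i / fact i))"
proof (induction r)
  case 0 then show ?case by simp
next
  case (Suc r)
  have Es: "Ef r x = (\<Sum>i<r. x ^ i / fact i)" for r by (induction r) auto
  have "(\<Sum>i<Suc r. real (Suc r - i) * (x ^ i / fact i)) =
        (\<Sum>i<Suc r. real (r - i) * (x ^ i / fact i) + x ^ i / fact i)"
  proof (rule sum.cong)
    fix i assume "i \<in> {..<Suc r}"
    then have "real (Suc r - i) = real (r - i) + 1" by (simp add: Suc_diff_le)
    then show "real (Suc r - i) * (x ^ i / fact i) = real (r - i) * (x ^ i / fact i) + x ^ i / fact i"
      by (simp only: \<open>real (Suc r - i) = real (r - i) + 1\<close> distrib_right mult_1_left)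
  qed simp
  also have "\<dots> = (\<Sum>i<r. real (r - i) * (x ^ i / fact i)) + Ef (Suc r) x"
    by (simp add: sum.distrib Es del: Ef.simps)
  finally show ?case using Suc by (simp add: Pf_def algebra_simps del: Ef.simps)
qed

lemma exp_min_pois_Gf: "exp_min_pois x k = Gf k x"
proof -
  define b where "b j = x ^ j / fact j * exp (- x)" for j
  have e: "(\<lambda>j. x ^ j / fact j) sums exp x" using exp_converges[of x] by (simp add: divide_inverse_commute)
  have 1: "(\<lambda>j. real k * b j) sums (real k * (exp x * exp (-x)))"
    unfolding b_def by (intro sums_mult sums_mult2 e)
  have 2: "(\<lambda>j. real (k - j) * b j) sums (\<Sum>j<k. real (k - j) * b j)"
    by (rule sums_finite) auto
  have "(\<lambda>j. real k * b j - real (k - j) * b j) sums (real k * (exp x * exp (-x)) - (\<Sum>j<k. real (k - j) * b j))"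
    by (rule sums_diff[OF 1 2])
  moreover have "(\<lambda>j. real k * b j - real (k - j) * b j) = (\<lambda>j. real (min j k) * b j)"
    by (auto simp: algebra_simps min_def of_nat_diff)
  ultimately have "(\<lambda>j. real (min j k) * b j) sums (real k - (\<Sum>j<k. real (k - j) * b j))"
    by (simp add: exp_minus_inverse)
  then have "exp_min_pois x k = real k - (\<Sum>j<k. real (k - j) * b j)"
    unfolding exp_min_pois_def b_def by (simp add: sums_iff)
  also have "\<dots> = Gf k x" unfolding Gf_closed b_def
    by (simp add: sum_distrib_left algebra_simps)
  finally show ?thesis .
qed


definition pbs :: "nat set \<Rightarrow> (nat \<Rightarrow> real) \<Rightarrow> (nat set \<Rightarrow> real) \<Rightarrow> real" where
  "pbs N q f = (\<Sum>A\<in>Pow N. ((\<Prod>i\<in>A. q i) * (\<Prod>i\<in>N - A. 1 - q i)) * f A)"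

lemma pbs_empty[simp]: "pbs {} q f = f {}"
  by (simp add: pbs_def)

lemma pbs_insert:
  assumes "finite N" "a \<notin> N"
  shows "pbs (insert a N) q f = (1 - q a) * pbs N q f + q a * pbs N q (\<lambda>A. f (insert a A))"
proof -
  have inj: "inj_on (insert a) (Pow N)" using assms(2) by (auto simp: inj_on_def)
  have disj: "Pow N \<inter> insert a ` Pow N = {}" using assms(2) by auto
  have fin: "finite (Pow N)" using assms by simp
  have "pbs (insert a N) q f =
    (\<Sum>A\<in>Pow N. ((\<Prod>i\<in>A. q i) * (\<Prod>i\<in>insert a N - A. 1 - q i)) * f A) +
    (\<Sum>A\<in>insert a ` Pow N. ((\<Prod>i\<in>A. q i) * (\<Prod>i\<in>insert a N - A. 1 - q i)) * f A)"
    unfolding pbs_def Pow_insert using fin disj by (simp add: sum.union_disjoint)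
  also have "(\<Sum>A\<in>Pow N. ((\<Prod>i\<in>A. q i) * (\<Prod>i\<in>insert a N - A. 1 - q i)) * f A)
      = (1 - q a) * pbs N q f"
    unfolding pbs_def sum_distrib_left
  proof (rule sum.cong)
    fix A assume A: "A \<in> Pow N"
    have "insert a N - A = insert a (N - A)" using A assms by auto
    moreover have "finite (N - A)" "a \<notin> N - A" using assms by auto
    ultimately have "(\<Prod>i\<in>insert a N - A. 1 - q i) = (1 - q a) * (\<Prod>i\<in>N - A. 1 - q i)" by simp
    then show "((\<Prod>i\<in>A. q i) * (\<Prod>i\<in>insert a N - A. 1 - q i)) * f A =
      (1 - q a) * (((\<Prod>i\<in>A. q i) * (\<Prod>i\<in>N - A. 1 - q i)) * f A)" by simp
  qed simp
  also have "(\<Sum>A\<in>insert a ` Pow N. ((\<Prod>i\<in>A. q i) * (\<Prod>i\<in>insert a N - A. 1 - q i)) * f A)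
      = q a * pbs N q (\<lambda>A. f (insert a A))"
    unfolding sum.reindex[OF inj] pbs_def sum_distrib_left o_def
  proof (rule sum.cong)
    fix A assume A: "A \<in> Pow N"
    have "insert a N - insert a A = N - A" using A assms by auto
    moreover have "finite A" "a \<notin> A" using A assms by (auto dest: finite_subset)
    ultimately show "((\<Prod>i\<in>insert a A. q i) * (\<Prod>i\<in>insert a N - insert a A. 1 - q i)) * f (insert a A) =
      q a * (((\<Prod>i\<in>A. q i) * (\<Prod>i\<in>N - A. 1 - q i)) * f (insert a A))" by simp
  qed simp
  finally show ?thesis .
qed

lemma pbs_cong: "(\<And>A. A \<subseteq> N \<Longrightarrow> f A = g A) \<Longrightarrow> pbs N q f = pbs N q g"
  unfolding pbs_def by (rule sum.cong) auto

lemma pbs_add: "pbs N q (\<lambda>A. f A + g A) = pbs N q f + pbs N q g"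
  unfolding pbs_def by (simp add: sum.distrib algebra_simps)

lemma pbs_diff: "pbs N q (\<lambda>A. f A - g A) = pbs N q f - pbs N q g"
  unfolding pbs_def by (simp add: sum_subtractf algebra_simps)

lemma pbs_cmult: "pbs N q (\<lambda>A. c * f A) = c * pbs N q f"
  unfolding pbs_def by (simp add: sum_distrib_left algebra_simps)

lemma pbs_const: "finite N \<Longrightarrow> pbs N q (\<lambda>A. c) = c"
proof (induction N rule: finite_induct)
  case (insert a N)
  then show ?case by (simp add: pbs_insert algebra_simps)
qed simp

lemma pbs_linear: "finite N \<Longrightarrow> pbs N q (\<lambda>A. \<Sum>i\<in>A. v i) = (\<Sum>i\<in>N. v i * q i)"
proof (induction N rule: finite_induct)
  case (insert a N)
  have "pbs N q (\<lambda>A. \<Sum>i\<in>insert a A. v i) = pbs N q (\<lambda>A. v a + (\<Sum>i\<in>A. v i))"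
    using insert by (intro pbs_cong) (auto dest: finite_subset intro!: sum.insert)
  also have "\<dots> = v a + pbs N q (\<lambda>A. \<Sum>i\<in>A. v i)"
    using pbs_add[of N q "\<lambda>A. v a"] pbs_const[OF insert(1)] by simp
  finally show ?case using insert by (simp add: pbs_insert algebra_simps)
qed simp

lemma pbs_compose:
  "finite N \<Longrightarrow> pbs N y (\<lambda>S. pbs S p f) = pbs N (\<lambda>i. y i * p i) f"
proof (induction N arbitrary: f rule: finite_induct)
  case (insert a N)
  have "pbs N y (\<lambda>S. pbs (insert a S) p f) =
     pbs N y (\<lambda>S. (1 - p a) * pbs S p f + p a * pbs S p (\<lambda>A. f (insert a A)))"
    using insert by (intro pbs_cong pbs_insert) (auto dest: finite_subset)
  also have "\<dots> = (1 - p a) * pbs N (\<lambda>i. y i * p i) f + p a * pbs N (\<lambda>i. y i * p i) (\<lambda>A. f (insert a A))"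
    by (simp add: pbs_add pbs_cmult insert.IH)
  finally have e: "pbs N y (\<lambda>S. pbs (insert a S) p f) = \<dots>" .
  show ?case using insert by (simp add: pbs_insert e insert.IH algebra_simps)
qed simp

lemma pbs_pois:
  assumes "finite N" "\<forall>i\<in>N. 0 \<le> q i \<and> q i \<le> 1"
  shows "Gf r (\<Sum>i\<in>N. q i) \<le> pbs N q (\<lambda>A. real (min (card A) r))"
  using assms
proof (induction N arbitrary: r rule: finite_induct)
  case empty
  then show ?case by (simp add: Gf_zero)
next
  case (insert a N)
  define \<mu> where "\<mu> = (\<Sum>i\<in>N. q i)"
  have qa: "0 \<le> q a" "q a \<le> 1" using insert by auto
  have mu0: "0 \<le> \<mu>" unfolding \<mu>_def using insert by (auto intro: sum_nonneg)
  show ?case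
  proof (cases r)
    case 0
    then show ?thesis using pbs_const[OF insert(1)] insert by (simp add: pbs_insert)
  next
    case (Suc r')
    have e: "pbs N q (\<lambda>A. real (min (card (insert a A)) r)) = 1 + pbs N q (\<lambda>A. real (min (card A) r'))"
    proof -
      have "pbs N q (\<lambda>A. real (min (card (insert a A)) r)) = pbs N q (\<lambda>A. 1 + real (min (card A) r'))"
      proof (rule pbs_cong)
        fix A assume "A \<subseteq> N"
        moreover have "finite A" using \<open>A \<subseteq> N\<close> insert(1) by (rule finite_subset)
        moreover have "a \<notin> A" using \<open>A \<subseteq> N\<close> insert(2) by blast
        ultimately have "card (insert a A) = Suc (card A)" by (simp add: card_insert_disjoint)
        then show "real (min (card (insert a A)) r) = 1 + real (min (card A) r')" using Suc by simp
      qed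
      also have "\<dots> = 1 + pbs N q (\<lambda>A. real (min (card A) r'))"
        using pbs_add[of N q "\<lambda>A. 1"] pbs_const[OF insert(1)] by simp
      finally show ?thesis .
    qed
    have IH1: "Gf r \<mu> \<le> pbs N q (\<lambda>A. real (min (card A) r))" using insert unfolding \<mu>_def by simp
    have IH2: "Gf r' \<mu> \<le> pbs N q (\<lambda>A. real (min (card A) r'))" using insert unfolding \<mu>_def by simp
    have "Gf r (\<Sum>i\<in>insert a N. q i) = Gf r (\<mu> + q a)" using insert by (simp add: \<mu>_def add.commute)
    also have "\<dots> \<le> Gf r \<mu> + q a * Pf r \<mu>" using Gf_mvt[OF mu0 qa(1)] .
    also have "\<dots> = (1 - q a) * Gf r \<mu> + q a * (1 + Gf r' \<mu>)" using Suc by (simp add: algebra_simps)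
    also have "\<dots> \<le> (1 - q a) * pbs N q (\<lambda>A. real (min (card A) r)) + q a * (1 + pbs N q (\<lambda>A. real (min (card A) r')))"
      using qa IH1 IH2 by (intro add_mono mult_left_mono) auto
    also have "\<dots> = pbs (insert a N) q (\<lambda>A. real (min (card A) r))"
      using insert e by (simp add: pbs_insert)
    finally show ?thesis .
  qed
qed


lemma reward_decomp: "reward k v A = (\<Sum>i\<in>A. v i) - real (card A) + real (min (card A) k)"
  unfolding reward_def by (auto simp: max_def min_def)

lemma threshold_bound:
  fixes N :: "nat set" and v d :: "nat \<Rightarrow> real"
  assumes fin: "finite N" and jN: "j \<in> N"
    and lo: "\<And>i. i \<in> N \<Longrightarrow> i < j \<Longrightarrow> d i \<ge> 0 \<and> v i \<ge> v j"
    and hi: "\<And>i. i \<in> N \<Longrightarrow> j < i \<Longrightarrow> d i \<le> 0 \<and> v i \<le> v j"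
    and s0: "(\<Sum>i\<in>N. d i) = 0"
  shows "(\<Sum>i\<in>N. v i * d i) \<ge> 0"
proof -
  have "(\<Sum>i\<in>N. v j * d i) \<le> (\<Sum>i\<in>N. v i * d i)"
  proof (rule sum_mono)
    fix i assume i: "i \<in> N"
    consider "i < j" | "i = j" | "j < i" by linarith
    then show "v j * d i \<le> v i * d i"
    proof cases
      case 1 then show ?thesis using lo[OF i] by (simp add: mult_right_mono)
    next
      case 2 then show ?thesis by simp
    next
      case 3 then show ?thesis using hi[OF i] by (simp add: mult_right_mono_neg)
    qed
  qed
  then show ?thesis using s0 by (simp add: sum_distrib_left[symmetric])
qed

theorem lemma6p4:
  fixes n k :: nat and p v y y' :: "nat \<Rightarrow> real" and s \<tau> :: real
  assumes "valid_instance n k p v"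
    and "0 \<le> s" and "s \<le> 1"
    and "0 < \<tau>" and "\<tau> < 1"
    and "tau_bounded n v \<tau>"
    and "(\<Sum>i\<in>V_high n v. p i) \<le> real k"
    and "ALG_sim_choice s n k p v y y'"
  shows "indep_offer_reward n k p v y' \<ge>
    (s - s / \<tau> + exp_min_pois (s * real k) k / (\<tau> * real k)) * LP_sim n k p v"
proof -
  define N where "N = {1..n}"
  have finN: "finite N" by (simp add: N_def)
  from assms(1) have k1: "1 \<le> k" and pv: "\<And>i. i \<in> N \<Longrightarrow> 0 \<le> p i \<and> p i \<le> 1 \<and> 0 \<le> v i"
    and vmono: "\<And>i j. i \<in> N \<Longrightarrow> j \<in> N \<Longrightarrow> i \<le> j \<Longrightarrow> v j \<le> v i"
    unfolding valid_instance_def N_def by auto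
  from assms(6) have vt: "\<And>i. i \<in> N \<Longrightarrow> \<tau> \<le> v i" unfolding tau_bounded_def N_def by auto
  from assms(8) obtain z where feas: "LP_feasible n k p y z" and opt: "LP_obj n p v y z = LP_sim n k p v"
    and mass: "(\<Sum>i=1..n. y i * p i) = target_mass n k p v"
    and thr: "threshold_form n y'"
    and mass': "(\<Sum>i=1..n. y' i * p i) = s * (\<Sum>i=1..n. y i * p i)"
    unfolding ALG_sim_choice_def by blast
  from feas have y01: "\<And>i. i \<in> N \<Longrightarrow> 0 \<le> y i \<and> y i \<le> 1" and z0: "z \<le> 0"
    unfolding LP_feasible_def N_def by auto
  from thr obtain j where jN: "j \<in> N" and yj: "0 \<le> y' j" "y' j \<le> 1"
    and ylo: "\<And>i. i \<in> N \<Longrightarrow> i < j \<Longrightarrow> y' i = 1" and yhi: "\<And>i. i \<in> N \<Longrightarrow> j < i \<Longrightarrow> y' i = 0"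
    unfolding threshold_form_def N_def by auto
  have y'01: "\<And>i. i \<in> N \<Longrightarrow> 0 \<le> y' i \<and> y' i \<le> 1"
    using ylo yhi yj by (metis linorder_neqE_nat order_refl zero_le_one)
  define m where "m = (\<Sum>i\<in>N. y i * p i)"
  define W0 where "W0 = (\<Sum>i\<in>N. v i * p i * y i)"
  define Q where "Q i = y' i * p i" for i
  have m_def': "m = (\<Sum>i=1..n. y i * p i)" by (simp add: m_def N_def)
  have mk: "m \<le> real k" using mass assms(7) unfolding m_def' target_mass_def by simp
  have m0: "0 \<le> m" unfolding m_def using y01 pv by (auto intro!: sum_nonneg)
  have SQ: "(\<Sum>i\<in>N. Q i) = s * m" using mass' by (simp add: Q_def m_def N_def)
  have Q01: "\<And>i. i \<in> N \<Longrightarrow> 0 \<le> Q i \<and> Q i \<le> 1"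
    using y'01 pv unfolding Q_def by (metis mult_le_one mult_nonneg_nonneg)
  have objz: "LP_obj n p v y z = W0 + z" unfolding LP_obj_def W0_def N_def by simp
  have bdd: "bdd_above {LP_obj n p v y z | y z. LP_feasible n k p y z}"
  proof (rule bdd_aboveI)
    fix x assume "x \<in> {LP_obj n p v y z | y z. LP_feasible n k p y z}"
    then obtain y2 z2 where x: "x = LP_obj n p v y2 z2" and f2: "LP_feasible n k p y2 z2" by blast
    have "x \<le> (\<Sum>i=1..n. v i * p i * y2 i)" using f2 unfolding x LP_obj_def LP_feasible_def by simp
    also have "\<dots> \<le> (\<Sum>i=1..n. v i * p i)"
      using f2 pv unfolding LP_feasible_def N_def by (intro sum_mono) (simp add: mult_left_le)
    finally show "x \<le> (\<Sum>i=1..n. v i * p i)" .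
  qed
  have feas0: "LP_feasible n k p y 0"
    using feas mk unfolding LP_feasible_def m_def' by (simp add: mult.commute)
  have "LP_obj n p v y 0 \<le> LP_sim n k p v"
    unfolding LP_sim_def using feas0 by (intro cSup_upper[OF _ bdd]) blast
  then have LPeq: "LP_sim n k p v = W0" using opt objz z0
    unfolding LP_obj_def W0_def N_def by simp
  have W0m: "\<tau> * m \<le> W0" unfolding m_def W0_def sum_distrib_left
  proof (rule sum_mono)
    fix i assume i: "i \<in> N"
    have "\<tau> * (y i * p i) \<le> v i * (y i * p i)" using vt[OF i] pv[OF i] y01[OF i]
      by (intro mult_right_mono) auto
    then show "\<tau> * (y i * p i) \<le> v i * p i * y i" by (simp add: algebra_simps)
  qed
  have VQ: "s * W0 \<le> (\<Sum>i\<in>N. v i * Q i)"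
  proof -
    define d where "d i = Q i - s * (y i * p i)" for i
    have "(\<Sum>i\<in>N. v i * d i) \<ge> 0"
    proof (rule threshold_bound[OF finN jN])
      fix i assume i: "i \<in> N" "i < j"
      have "s * (y i * p i) \<le> 1 * (1 * p i)" using assms(2,3) y01[OF i(1)] pv[OF i(1)]
        by (intro mult_mono) auto
      then show "d i \<ge> 0 \<and> v i \<ge> v j" using ylo[OF i] vmono[OF i(1) jN] i
        by (simp add: d_def Q_def)
    next
      fix i assume i: "i \<in> N" "j < i"
      have "0 \<le> s * (y i * p i)" using assms(2) y01[OF i(1)] pv[OF i(1)] by simp
      then show "d i \<le> 0 \<and> v i \<le> v j" using yhi[OF i] vmono[OF jN i(1)] i
        by (simp add: d_def Q_def)
    next
      show "(\<Sum>i\<in>N. d i) = 0" unfolding d_def sum_subtractf SQ m_def sum_distrib_left by simp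
    qed
    then show ?thesis unfolding d_def W0_def
      by (simp add: algebra_simps sum_subtractf sum_distrib_left)
  qed
  define g where "g = pbs N Q (\<lambda>A. real (min (card A) k))"
  have R: "indep_offer_reward n k p v y' = (\<Sum>i\<in>N. v i * Q i) - s * m + g"
  proof -
    have "indep_offer_reward n k p v y' = pbs N y' (\<lambda>S. pbs S p (reward k v))"
      unfolding indep_offer_reward_def pbs_def subset_prob_def N_def by simp
    also have "\<dots> = pbs N Q (reward k v)" unfolding Q_def by (rule pbs_compose[OF finN])
    also have "\<dots> = pbs N Q (\<lambda>A. (\<Sum>i\<in>A. v i) - (\<Sum>i\<in>A. 1) + real (min (card A) k))"
      unfolding reward_decomp by simp
    also have "\<dots> = (\<Sum>i\<in>N. v i * Q i) - (\<Sum>i\<in>N. 1 * Q i) + g"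
      unfolding pbs_add pbs_diff g_def pbs_linear[OF finN] by simp
    finally show ?thesis using SQ by simp
  qed
  define c where "c = exp_min_pois (s * real k) k"
  have c_eq: "c = Gf k (s * real k)" unfolding c_def exp_min_pois_Gf ..
  have kpos: "0 < real k" using k1 by simp
  have gc: "m / real k * c \<le> g"
  proof -
    have "m / real k * c \<le> Gf k (m / real k * (s * real k))" unfolding c_eq
      using m0 mk kpos assms(2) by (intro Gf_concave) auto
    also have "m / real k * (s * real k) = (\<Sum>i\<in>N. Q i)" using SQ kpos by simp
    also have "Gf k (\<Sum>i\<in>N. Q i) \<le> g" unfolding g_def using pbs_pois[OF finN] Q01 by blast
    finally show ?thesis .
  qed
  have csk: "c \<le> s * real k" unfolding c_eq using Gf_le assms(2) by simp
  have A1: "0 \<le> s - c / real k" using csk kpos by (simp add: field_simps)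
  have A2: "0 \<le> W0 / \<tau> - m" using W0m assms(4) by (simp add: field_simps)
  have "0 \<le> (s - c / real k) * (W0 / \<tau> - m)" using A1 A2 by simp
  moreover have "(s - s / \<tau> + c / (\<tau> * real k)) * W0 = s * W0 - (s - c / real k) * (W0 / \<tau>)"
    using assms(4) kpos by (simp add: field_simps)
  moreover have "m / real k * c = s * m - (s - c / real k) * m" using kpos by (simp add: field_simps)
  ultimately have "(s - s / \<tau> + c / (\<tau> * real k)) * W0 \<le> s * W0 - s * m + m / real k * c"
    by (simp add: algebra_simps)
  also have "\<dots> \<le> indep_offer_reward n k p v y'" using R VQ gc by simp
  finally show ?thesis unfolding LPeq c_def .
qed

end
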